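(* Let $p$ be an odd prime. Let $N$ be a subgroup of $\mathrm{PGL}_2(\mathbb{F}_p)$ isomorphic to $C_2\times C_2$, so that there are three subgroups $C<N$ of index $2$. If $N\le\mathrm{PSL}_2(\mathbb{F}_p)$, then every such $C$ is contained in (the image of) a Cartan subgroup and $N$ in its normaliser, and each $C$ is split when $p\equiv1\pmod4$ and non-split when $p\equiv3\pmod4$. If $N\not\le\mathrm{PSL}_2(\mathbb{F}_p)$, then for $p\equiv1\pmod4$ one such subgroup $C$ is contained in a split Cartan subgroup while the other two are contained in non-split Cartan subgroups; while if $p\equiv3\pmod4$ then one $C$ is non-split and the other two are split.
   Context: A Cartan subgroup of $\mathrm{GL}_2(\mathbb{F}_p)$ is split (conjugate to the diagonal matrices) or non-split (conjugate to the image of $\mathbb{F}_{p^2}^*$ acting on $\mathbb{F}_{p^2}\cong\mathbb{F}_p^2$); Cartan subgroups of $\mathrm{PGL}_2(\mathbb{F}_p)$, their normalisers, and the terms split/non-split there refer to images of those in $\mathrm{GL}_2(\mathbb{F}_p)$. $\mathrm{PSL}_2(\mathbb{F}_p)$ is viewed as the index-$2$ subgroup of $\mathrm{PGL}_2(\mathbb{F}_p)$ of classes of matrices with square determinant. *)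

theory Defs
  imports "HOL-Algebra.Algebra" "HOL-Algebra.Group_Action" "HOL-Algebra.Elementary_Groups"
          "HOL-Number_Theory.Residues"
begin

text \<open>2x2 matrices over F_p, written (a,b,c,d) for the matrix [[a,b],[c,d]],
  with entries taken as canonical representatives in {0..<p}.\<close>

type_synonym mat2 = "int \<times> int \<times> int \<times> int"

definition mat2_mult :: "int \<Rightarrow> mat2 \<Rightarrow> mat2 \<Rightarrow> mat2" where
  "mat2_mult p = (\<lambda>(a,b,c,d) (e,f,g,h).
     ((a*e + b*g) mod p, (a*f + b*h) mod p, (c*e + d*g) mod p, (c*f + d*h) mod p))"

definition mat2_det :: "mat2 \<Rightarrow> int" where
  "mat2_det M = (case M of (x,y,z,w) \<Rightarrow> x*w - y*z)"

definition GL2 :: "int \<Rightarrow> mat2 monoid" where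
  "GL2 p = \<lparr> carrier = {(a,b,c,d). a \<in> {0..<p} \<and> b \<in> {0..<p} \<and> c \<in> {0..<p} \<and> d \<in> {0..<p}
                                  \<and> mat2_det (a,b,c,d) mod p \<noteq> 0},
             monoid.mult = mat2_mult p, one = (1,0,0,1) \<rparr>"

definition scalars :: "int \<Rightarrow> mat2 set" where
  "scalars p = {(a,0,0,a) | a. a \<in> {1..<p}}"

definition PGL2 :: "int \<Rightarrow> mat2 set monoid" where
  "PGL2 p = GL2 p Mod scalars p"

definition proj2 :: "int \<Rightarrow> mat2 \<Rightarrow> mat2 set" where
  "proj2 p g = scalars p #>\<^bsub>GL2 p\<^esub> g"

definition PSL2 :: "int \<Rightarrow> mat2 set set" where
  "PSL2 p = {proj2 p g | g. g \<in> carrier (GL2 p) \<and> QuadRes p (mat2_det g)}"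

definition conjugate_set :: "int \<Rightarrow> mat2 \<Rightarrow> mat2 set \<Rightarrow> mat2 set" where
  "conjugate_set p h T = (\<lambda>t. h \<otimes>\<^bsub>GL2 p\<^esub> t \<otimes>\<^bsub>GL2 p\<^esub> inv\<^bsub>GL2 p\<^esub> h) ` T"

definition diag_torus :: "int \<Rightarrow> mat2 set" where
  "diag_torus p = {(a,0,0,d) | a d. a \<in> {1..<p} \<and> d \<in> {1..<p}}"

text \<open>Image of F_{p^2}^* = F_p(sqrt e)^* (e a non-square mod p) acting by multiplication
  on F_{p^2} with F_p-basis 1, sqrt e: a + b sqrt e acts by [[a, b e],[b, a]].\<close>
definition nonsplit_torus :: "int \<Rightarrow> int \<Rightarrow> mat2 set" where
  "nonsplit_torus p e = {(a, (b*e) mod p, b, a) | a b. a \<in> {0..<p} \<and> b \<in> {0..<p} \<and> (a,b) \<noteq> (0,0)}"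

definition split_cartan :: "int \<Rightarrow> mat2 set \<Rightarrow> bool" where
  "split_cartan p T \<longleftrightarrow> (\<exists>h \<in> carrier (GL2 p). T = conjugate_set p h (diag_torus p))"

definition nonsplit_cartan :: "int \<Rightarrow> mat2 set \<Rightarrow> bool" where
  "nonsplit_cartan p T \<longleftrightarrow> (\<exists>h \<in> carrier (GL2 p). \<exists>e. \<not> QuadRes p e \<and>
        T = conjugate_set p h (nonsplit_torus p e))"

definition cartan :: "int \<Rightarrow> mat2 set \<Rightarrow> bool" where
  "cartan p T \<longleftrightarrow> split_cartan p T \<or> nonsplit_cartan p T"

definition in_split_cartan :: "int \<Rightarrow> mat2 set set \<Rightarrow> bool" where
  "in_split_cartan p C \<longleftrightarrow> (\<exists>T. split_cartan p T \<and> C \<subseteq> proj2 p ` T)"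

definition in_nonsplit_cartan :: "int \<Rightarrow> mat2 set set \<Rightarrow> bool" where
  "in_nonsplit_cartan p C \<longleftrightarrow> (\<exists>T. nonsplit_cartan p T \<and> C \<subseteq> proj2 p ` T)"

definition index2_subgroups :: "int \<Rightarrow> mat2 set set \<Rightarrow> mat2 set set set" where
  "index2_subgroups p N = {C. subgroup C (PGL2 p) \<and> C \<subseteq> N \<and> card N = 2 * card C}"

end

theory Submission imports Defs "HOL-Number_Theory.Euler_Criterion" begin

lemma p3_of: fixes p :: int assumes "Factorial_Ring.prime p" "odd p" shows "p \<ge> 3"
proof -
  have "p \<ge> 2" using prime_ge_2_int[OF assms(1)] .
  moreover have "p \<noteq> 2" using assms(2) by auto
  ultimately show ?thesis by linarith
qed

lemma leg_vals: "Legendre a p \<in> {-1,0,1}"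
  by (simp add: Legendre_def)

lemma leg_eq_of_cong:
  fixes p :: int
  assumes "Factorial_Ring.prime p" "odd p" "[x = y] (mod p)" "x \<in> {-1,0,1}" "y \<in> {-1,0,1}"
  shows "x = y"
proof -
  have p3: "p \<ge> 3" using p3_of[OF assms(1,2)] .
  have "p dvd x - y" using assms(3) by (simp add: cong_iff_dvd_diff cong_sym_eq)
  then obtain k where k: "x - y = p * k" by auto
  have "\<bar>x - y\<bar> \<le> 2" using assms(4,5) by auto
  then have "k = 0" using k p3
    by (smt (verit, best) mult_le_cancel_left1 mult_minus_right zero_less_mult_iff)
  then show ?thesis using k by simp
qed

lemma euler_int:
  fixes p :: int
  assumes "Factorial_Ring.prime p" "odd p"
  shows "[Legendre a p = a ^ nat ((p - 1) div 2)] (mod p)"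
proof -
  have p3: "p \<ge> 3" using p3_of[OF assms(1,2)] .
  have pn: "Factorial_Ring.prime (nat p)" using assms(1) p3 by (simp add: prime_nat_iff_prime)
  have "[Legendre a (int (nat p)) = a ^ ((nat p - 1) div 2)] (mod int (nat p))"
    using euler_criterion[OF pn] p3 by auto
  moreover have "(nat p - 1) div 2 = nat ((p - 1) div 2)" using p3 by (simp add: nat_div_distrib)
  ultimately show ?thesis using p3 by simp
qed

lemma leg_mult:
  fixes p :: int
  assumes "Factorial_Ring.prime p" "odd p"
  shows "Legendre (a * b) p = Legendre a p * Legendre b p"
proof -
  let ?k = "nat ((p - 1) div 2)"
  have "[Legendre (a*b) p = (a*b) ^ ?k] (mod p)" by (rule euler_int[OF assms])
  moreover have "[Legendre a p * Legendre b p = a ^ ?k * b ^ ?k] (mod p)"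
    using euler_int[OF assms] cong_mult by blast
  ultimately have "[Legendre (a*b) p = Legendre a p * Legendre b p] (mod p)"
    by (metis cong_sym cong_trans power_mult_distrib)
  moreover have "Legendre a p * Legendre b p \<in> {-1,0,1}" using leg_vals[of a p] leg_vals[of b p] by auto
  ultimately show ?thesis using leg_eq_of_cong[OF assms] leg_vals by blast
qed

lemma leg_minus1:
  fixes p :: int
  assumes "Factorial_Ring.prime p" "odd p"
  shows "Legendre (-1) p = (if [p = 1] (mod 4) then 1 else -1)"
proof -
  let ?k = "nat ((p - 1) div 2)"
  have p3: "p \<ge> 3" using p3_of[OF assms(1,2)] .
  have e: "[Legendre (-1) p = (-1) ^ ?k] (mod p)" by (rule euler_int[OF assms])
  have "(-1::int) ^ ?k = (if [p = 1] (mod 4) then 1 else -1)"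
  proof (cases "[p = 1] (mod 4)")
    case True
    then have "even ((p - 1) div 2)" unfolding cong_def by presburger
    then have "even ?k" using p3 by (simp add: even_nat_iff)
    then show ?thesis using True by simp
  next
    case False
    then have "odd ((p - 1) div 2)" using assms(2) unfolding cong_def by presburger
    then have "odd ?k" using p3 by (simp add: even_nat_iff)
    then show ?thesis using False by simp
  qed
  then show ?thesis using e leg_eq_of_cong[OF assms] leg_vals[of "-1" p]
    by (metis (no_types, lifting) insertCI)
qed


lemma qr_iff_leg:
  fixes p :: int
  assumes "a mod p \<noteq> 0"
  shows "QuadRes p a \<longleftrightarrow> Legendre a p = 1"
  using assms by (simp add: Legendre_def cong_def)

lemma qr_mod: "QuadRes p (a mod p) \<longleftrightarrow> QuadRes p a"
  unfolding QuadRes_def cong_def by simp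

lemma qr_cong: "[a = b] (mod p) \<Longrightarrow> QuadRes p a \<longleftrightarrow> QuadRes p b"
  unfolding QuadRes_def cong_def by simp

section \<open>Matrix arithmetic\<close>

definition mm :: "mat2 \<Rightarrow> mat2 \<Rightarrow> mat2" where
  "mm M N = (case M of (a,b,c,d) \<Rightarrow> case N of (e,f,g,h) \<Rightarrow>
      (a*e+b*g, a*f+b*h, c*e+d*g, c*f+d*h))"

definition red :: "int \<Rightarrow> mat2 \<Rightarrow> mat2" where
  "red p M = (case M of (a,b,c,d) \<Rightarrow> (a mod p, b mod p, c mod p, d mod p))"

lemma mm_simp: "mm (a,b,c,d) (e,f,g,h) = (a*e+b*g, a*f+b*h, c*e+d*g, c*f+d*h)"
  by (simp add: mm_def)

lemma red_simp: "red p (a,b,c,d) = (a mod p, b mod p, c mod p, d mod p)"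
  by (simp add: red_def)

lemma mult_red: "mat2_mult p M N = red p (mm M N)"
  by (cases M; cases N) (simp add: mat2_mult_def mm_def red_def)

lemma modl1: "((a mod p) * e + (b mod p) * g) mod p = (a * e + b * g) mod (p::int)"
  by (metis mod_add_eq mod_mult_left_eq)
lemma modl2: "(a * (e mod p) + b * (g mod p)) mod p = (a * e + b * g) mod (p::int)"
  by (metis mod_add_eq mod_mult_right_eq)
lemma modl3: "(a mod p * (d mod p) - b mod p * (c mod p)) mod p = (a * d - b * c) mod (p::int)"
  by (metis mod_diff_eq mod_mult_eq)

lemma red_mm_left: "red p (mm (red p M) N) = red p (mm M N)"
  by (cases M; cases N) (simp add: mm_def red_def modl1)

lemma red_mm_right: "red p (mm M (red p N)) = red p (mm M N)"
  by (cases M; cases N) (simp add: mm_def red_def modl2)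

lemma red_red: "red p (red p M) = red p M"
  by (cases M) (simp add: red_def)

lemma mm_assoc: "mm (mm A B) C = mm A (mm B C)"
  by (cases A; cases B; cases C) (simp add: mm_def algebra_simps)

lemma det_mm: "mat2_det (mm M N) = mat2_det M * mat2_det N"
  by (cases M; cases N) (simp add: mm_def mat2_det_def algebra_simps)

lemma det_red: "mat2_det (red p M) mod p = mat2_det M mod p"
  by (cases M) (simp add: red_def mat2_det_def modl3)

lemma GL2_mem: "(a,b,c,d) \<in> carrier (GL2 p) \<longleftrightarrow>
   a \<in> {0..<p} \<and> b \<in> {0..<p} \<and> c \<in> {0..<p} \<and> d \<in> {0..<p} \<and> mat2_det (a,b,c,d) mod p \<noteq> 0"
  by (simp add: GL2_def)

lemma GL2_red: "M \<in> carrier (GL2 p) \<Longrightarrow> red p M = M"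
  by (cases M) (simp add: GL2_def red_def)

lemma red_in_GL2: "(p::int) > 0 \<Longrightarrow> red p M \<in> carrier (GL2 p) \<longleftrightarrow> mat2_det M mod p \<noteq> 0"
  using det_red[of p M]
  by (cases M) (simp add: GL2_def red_def)

lemma GL2_mult: "M \<otimes>\<^bsub>GL2 p\<^esub> N = red p (mm M N)"
  by (simp add: GL2_def mult_red)

lemma GL2_one: "\<one>\<^bsub>GL2 p\<^esub> = (1,0,0,1)"
  by (simp add: GL2_def)

lemma GL2_det: "M \<in> carrier (GL2 p) \<Longrightarrow> mat2_det M mod p \<noteq> 0"
  by (cases M) (simp add: GL2_def)

lemma prime_not_dvd_mult:
  fixes p :: int
  assumes "Factorial_Ring.prime p" "x mod p \<noteq> 0" "y mod p \<noteq> 0"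
  shows "(x * y) mod p \<noteq> 0"
  using assms by (simp add: prime_dvd_mult_iff dvd_eq_mod_eq_0[symmetric])

lemma GL2_group:
  fixes p :: int
  assumes pr: "Factorial_Ring.prime p"
  shows "group (GL2 p)"
proof -
  have p1: "p > 1" using prime_gt_1_int[OF pr] .
  have p0: "p > 0" using p1 by simp
  show ?thesis
  proof (rule groupI)
    fix x y assume x: "x \<in> carrier (GL2 p)" and y: "y \<in> carrier (GL2 p)"
    have "mat2_det (mm x y) mod p \<noteq> 0"
      using prime_not_dvd_mult[OF pr GL2_det[OF x] GL2_det[OF y]] by (simp add: det_mm)
    then show "x \<otimes>\<^bsub>GL2 p\<^esub> y \<in> carrier (GL2 p)"
      by (simp add: GL2_mult red_in_GL2[OF p0])
  next
    show "\<one>\<^bsub>GL2 p\<^esub> \<in> carrier (GL2 p)" using p1 by (simp add: GL2_def mat2_det_def)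
  next
    fix x y z assume x: "x \<in> carrier (GL2 p)" and y: "y \<in> carrier (GL2 p)" and z: "z \<in> carrier (GL2 p)"
    show "x \<otimes>\<^bsub>GL2 p\<^esub> y \<otimes>\<^bsub>GL2 p\<^esub> z = x \<otimes>\<^bsub>GL2 p\<^esub> (y \<otimes>\<^bsub>GL2 p\<^esub> z)"
      by (simp add: GL2_mult red_mm_left red_mm_right mm_assoc)
  next
    fix x assume x: "x \<in> carrier (GL2 p)"
    show "\<one>\<^bsub>GL2 p\<^esub> \<otimes>\<^bsub>GL2 p\<^esub> x = x"
      using GL2_red[OF x] by (cases x) (simp add: GL2_mult GL2_one mm_def red_def)
  next
    fix x assume x: "x \<in> carrier (GL2 p)"
    obtain a b c d where xe: "x = (a,b,c,d)" by (cases x)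
    let ?D = "mat2_det x"
    have D: "?D mod p \<noteq> 0" using GL2_det[OF x] .
    have "coprime ?D p"
      using D pr by (metis dvd_eq_mod_eq_0 prime_imp_coprime coprime_commute)
    then obtain u where u: "[?D * u = 1] (mod p)" using cong_solve_coprime_int by blast
    let ?Y = "red p (u * d, - u * b, - u * c, u * a)"
    have prod: "mm (u * d, - u * b, - u * c, u * a) x = (u * ?D, 0, 0, u * ?D)"
      by (simp add: xe mm_def mat2_det_def algebra_simps)
    have uD: "(u * ?D) mod p = 1"
      using u p1 unfolding cong_def by (simp add: mult.commute)
    have "mat2_det (mm (u * d, - u * b, - u * c, u * a) x) mod p \<noteq> 0"
    proof -
      have "(u * ?D * (u * ?D)) mod p = ((u * ?D) mod p * ((u * ?D) mod p)) mod p"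
        by (simp add: mod_mult_eq)
      also have "\<dots> = 1" using uD p1 by simp
      finally show ?thesis unfolding prod mat2_det_def by simp
    qed
    then have "mat2_det (u * d, - u * b, - u * c, u * a) mod p \<noteq> 0"
      by (auto simp: det_mm)
    then have Yc: "?Y \<in> carrier (GL2 p)" using red_in_GL2[OF p0] by blast
    have "?Y \<otimes>\<^bsub>GL2 p\<^esub> x = (1,0,0,1)"
      by (simp only: GL2_mult red_mm_left prod) (simp add: red_simp uD)
    then show "\<exists>y\<in>carrier (GL2 p). y \<otimes>\<^bsub>GL2 p\<^esub> x = \<one>\<^bsub>GL2 p\<^esub>"
      using Yc by (auto simp: GL2_one)
  qed
qed


lemma (in group) inv_cancel_left2: "x \<in> carrier G \<Longrightarrow> y \<in> carrier G \<Longrightarrow> inv x \<otimes> (x \<otimes> y) = y"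
  by (simp add: m_assoc[symmetric])

lemma (in group) inv_cancel_left1: "x \<in> carrier G \<Longrightarrow> y \<in> carrier G \<Longrightarrow> x \<otimes> (inv x \<otimes> y) = y"
  by (simp add: m_assoc[symmetric])

lemma (in group) conj_centralizer:
  assumes h: "h \<in> carrier G" and d: "d \<in> carrier G"
  shows "(\<lambda>t. h \<otimes> t \<otimes> inv h) ` {m \<in> carrier G. m \<otimes> d = d \<otimes> m}
       = {y \<in> carrier G. y \<otimes> (h \<otimes> d \<otimes> inv h) = (h \<otimes> d \<otimes> inv h) \<otimes> y}"
proof (intro equalityI subsetI)
  fix y assume "y \<in> (\<lambda>t. h \<otimes> t \<otimes> inv h) ` {m \<in> carrier G. m \<otimes> d = d \<otimes> m}"
  then obtain m where m: "m \<in> carrier G" "m \<otimes> d = d \<otimes> m" and y: "y = h \<otimes> m \<otimes> inv h" by blast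
  have md': "\<And>x. x \<in> carrier G \<Longrightarrow> m \<otimes> (d \<otimes> x) = d \<otimes> (m \<otimes> x)"
    using m d by (metis m_assoc)
  have "y \<otimes> (h \<otimes> d \<otimes> inv h) = (h \<otimes> d \<otimes> inv h) \<otimes> y"
    using m h d by (simp add: y m_assoc inv_cancel_left2 md')
  then show "y \<in> {y \<in> carrier G. y \<otimes> (h \<otimes> d \<otimes> inv h) = (h \<otimes> d \<otimes> inv h) \<otimes> y}"
    using m h by (simp add: y)
next
  fix y assume "y \<in> {y \<in> carrier G. y \<otimes> (h \<otimes> d \<otimes> inv h) = (h \<otimes> d \<otimes> inv h) \<otimes> y}"
  then have y: "y \<in> carrier G" and c: "y \<otimes> (h \<otimes> d \<otimes> inv h) = (h \<otimes> d \<otimes> inv h) \<otimes> y" by auto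
  define m where "m = inv h \<otimes> y \<otimes> h"
  have mc: "m \<in> carrier G" using y h by (simp add: m_def)
  have ym: "y = h \<otimes> m \<otimes> inv h" using y h by (simp add: m_def m_assoc inv_cancel_left1)
  have "h \<otimes> (m \<otimes> d) \<otimes> inv h = y \<otimes> (h \<otimes> d \<otimes> inv h)"
    using mc h d by (simp add: ym m_assoc inv_cancel_left2)
  also have "\<dots> = (h \<otimes> d \<otimes> inv h) \<otimes> y" by (rule c)
  also have "\<dots> = h \<otimes> (d \<otimes> m) \<otimes> inv h"
    using mc h d by (simp add: ym m_assoc inv_cancel_left2)
  finally have "h \<otimes> (m \<otimes> d) \<otimes> inv h = h \<otimes> (d \<otimes> m) \<otimes> inv h" .
  then have "m \<otimes> d = d \<otimes> m" using mc h d
    by (metis inv_closed m_closed r_cancel l_cancel)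
  then show "y \<in> (\<lambda>t. h \<otimes> t \<otimes> inv h) ` {m \<in> carrier G. m \<otimes> d = d \<otimes> m}"
    using ym mc by blast
qed

lemma (in group) centralizer_scale:
  assumes s: "s \<in> carrier G" and g: "g \<in> carrier G" and sc: "\<And>x. x \<in> carrier G \<Longrightarrow> s \<otimes> x = x \<otimes> s"
  shows "{y \<in> carrier G. y \<otimes> (s \<otimes> g) = (s \<otimes> g) \<otimes> y} = {y \<in> carrier G. y \<otimes> g = g \<otimes> y}"
proof -
  have "y \<otimes> (s \<otimes> g) = (s \<otimes> g) \<otimes> y \<longleftrightarrow> y \<otimes> g = g \<otimes> y" if y: "y \<in> carrier G" for y
  proof -
    have "y \<otimes> (s \<otimes> g) = s \<otimes> (y \<otimes> g)" using s g y sc[of y] by (simp add: m_assoc[symmetric])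
    moreover have "(s \<otimes> g) \<otimes> y = s \<otimes> (g \<otimes> y)" using s g y by (simp add: m_assoc)
    ultimately show ?thesis using s g y by simp
  qed
  then show ?thesis by blast
qed

locale pp =
  fixes p :: int
  assumes pr: "Factorial_Ring.prime p" and od: "odd p"
begin

lemma p3: "p \<ge> 3" using p3_of[OF pr od] .
lemma p0: "p > 0" using p3 by simp

lemma grp: "group (GL2 p)" using GL2_group[OF pr] .

lemma nz_mult: "x mod p \<noteq> 0 \<Longrightarrow> y mod p \<noteq> 0 \<Longrightarrow> (x * y) mod p \<noteq> 0"
  using prime_not_dvd_mult[OF pr] .

lemma two_nz: "2 mod p \<noteq> 0"
proof
  assume "2 mod p = 0"
  then have "p dvd 2" by (simp add: dvd_eq_mod_eq_0)
  then have "p \<le> 2" by (rule zdvd_imp_le) simp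
  then show False using p3 by simp
qed

lemma dvd_prod: "p dvd x * y \<Longrightarrow> p dvd x \<or> p dvd y"
  using pr by (simp add: prime_dvd_mult_iff)

lemma range_mod0: "x \<in> {0..<p} \<Longrightarrow> x mod p = 0 \<Longrightarrow> x = 0"
  by auto

lemma scal_inv: assumes "a \<in> {1..<p}" shows "\<exists>b \<in> {1..<p}. (b * a) mod p = 1"
proof -
  have "\<not> p dvd a" using assms zdvd_not_zless[of a p] by auto
  then have "coprime a p" using pr prime_imp_coprime coprime_commute by blast
  then obtain u where u: "[a * u = 1] (mod p)" using cong_solve_coprime_int by blast
  have "(a * u) mod p = 1" using u p3 unfolding cong_def by simp
  then have e: "(u mod p * a) mod p = 1" by (metis mod_mult_left_eq mult.commute)
  moreover have "u mod p \<noteq> 0" using e by (metis mod_0 mult_zero_left zero_neq_one)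
  moreover have "u mod p \<ge> 0" "u mod p < p" using p0 by auto
  ultimately show ?thesis by (intro bexI[of _ "u mod p"]) auto
qed

lemma scal_carrier: "scalars p \<subseteq> carrier (GL2 p)"
proof
  fix x assume "x \<in> scalars p"
  then obtain a where x: "x = (a,0,0,a)" and a: "a \<in> {1..<p}" by (auto simp: scalars_def)
  have "(a * a) mod p \<noteq> 0" using nz_mult[of a a] a by auto
  then show "x \<in> carrier (GL2 p)" using a by (simp add: x GL2_def mat2_det_def)
qed

lemma scal_mult: "(a,0,0,a) \<otimes>\<^bsub>GL2 p\<^esub> (b,0,0,b) = ((a * b) mod p, 0, 0, (a * b) mod p)"
  by (simp add: GL2_mult mm_simp red_simp mult.commute)

lemma scal_sub: "subgroup (scalars p) (GL2 p)"
proof (rule group.subgroupI[OF grp scal_carrier])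
  have "(1,0,0,1) \<in> scalars p" using p3 unfolding scalars_def by auto
  then show "scalars p \<noteq> {}" by blast
next
  fix x assume "x \<in> scalars p"
  then obtain a where x: "x = (a,0,0,a)" and a: "a \<in> {1..<p}" by (auto simp: scalars_def)
  obtain b where b: "b \<in> {1..<p}" "(b * a) mod p = 1" using scal_inv[OF a] by blast
  have "(b,0,0,b) \<in> scalars p" using b by (auto simp: scalars_def)
  moreover have "(b,0,0,b) \<otimes>\<^bsub>GL2 p\<^esub> x = \<one>\<^bsub>GL2 p\<^esub>" using b by (simp add: x scal_mult GL2_one)
  moreover have "x \<in> carrier (GL2 p)" "(b,0,0,b) \<in> carrier (GL2 p)"
    using scal_carrier \<open>x \<in> scalars p\<close> calculation(1) by auto
  ultimately show "inv\<^bsub>GL2 p\<^esub> x \<in> scalars p"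
    using group.inv_equality[OF grp] by simp
next
  fix x y assume "x \<in> scalars p" "y \<in> scalars p"
  then obtain a b where x: "x = (a,0,0,a)" and a: "a \<in> {1..<p}" and y: "y = (b,0,0,b)" and b: "b \<in> {1..<p}"
    by (auto simp: scalars_def)
  have "(a * b) mod p \<noteq> 0" using nz_mult[of a b] a b by auto
  moreover have "(a * b) mod p \<ge> 0" "(a * b) mod p < p" using p0 by auto
  ultimately have "(a * b) mod p \<in> {1..<p}" by auto
  then show "x \<otimes>\<^bsub>GL2 p\<^esub> y \<in> scalars p"
    unfolding x y scal_mult scalars_def by blast
qed

lemma scal_central: "z \<in> scalars p \<Longrightarrow> x \<in> carrier (GL2 p) \<Longrightarrow> z \<otimes>\<^bsub>GL2 p\<^esub> x = x \<otimes>\<^bsub>GL2 p\<^esub> z"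
  by (cases x) (auto simp: scalars_def GL2_mult mm_simp mult.commute)

lemma scal_normal: "scalars p \<lhd> GL2 p"
proof -
  interpret G: group "GL2 p" by (rule grp)
  show ?thesis
    unfolding G.normal_inv_iff
  proof (intro conjI ballI scal_sub)
    fix x h assume x: "x \<in> carrier (GL2 p)" and h: "h \<in> scalars p"
    have hc: "h \<in> carrier (GL2 p)" using h scal_carrier by auto
    have "x \<otimes>\<^bsub>GL2 p\<^esub> h \<otimes>\<^bsub>GL2 p\<^esub> inv\<^bsub>GL2 p\<^esub> x = h \<otimes>\<^bsub>GL2 p\<^esub> x \<otimes>\<^bsub>GL2 p\<^esub> inv\<^bsub>GL2 p\<^esub> x"
      using scal_central[OF h x] by simp
    also have "\<dots> = h" using x hc by (simp add: G.m_assoc)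
    finally have "x \<otimes>\<^bsub>GL2 p\<^esub> h \<otimes>\<^bsub>GL2 p\<^esub> inv\<^bsub>GL2 p\<^esub> x = h" .
    then show "x \<otimes>\<^bsub>GL2 p\<^esub> h \<otimes>\<^bsub>GL2 p\<^esub> inv\<^bsub>GL2 p\<^esub> x \<in> scalars p" using h by simp
  qed
qed

lemma pgrp: "group (PGL2 p)"
  unfolding PGL2_def using normal.factorgroup_is_group[OF scal_normal] .

lemma proj_hom: "proj2 p \<in> hom (GL2 p) (PGL2 p)"
proof -
  have "proj2 p = (\<lambda>a. scalars p #>\<^bsub>GL2 p\<^esub> a)" by (simp add: proj2_def fun_eq_iff)
  then show ?thesis unfolding PGL2_def using normal.r_coset_hom_Mod[OF scal_normal] by simp
qed

lemma P_carrier: "carrier (PGL2 p) = proj2 p ` carrier (GL2 p)"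
  unfolding PGL2_def carrier_FactGroup proj2_def by simp

lemma proj_mult: "g \<in> carrier (GL2 p) \<Longrightarrow> h \<in> carrier (GL2 p) \<Longrightarrow>
   proj2 p (g \<otimes>\<^bsub>GL2 p\<^esub> h) = proj2 p g \<otimes>\<^bsub>PGL2 p\<^esub> proj2 p h"
  using proj_hom by (simp add: hom_mult)

lemma proj_one: "proj2 p \<one>\<^bsub>GL2 p\<^esub> = \<one>\<^bsub>PGL2 p\<^esub>"
  using hom_one[OF proj_hom] pgrp grp by (simp add: group.is_monoid hom_one)

lemma proj_inv: "g \<in> carrier (GL2 p) \<Longrightarrow> proj2 p (inv\<^bsub>GL2 p\<^esub> g) = inv\<^bsub>PGL2 p\<^esub> proj2 p g"
  using group_hom.hom_inv[of "GL2 p" "PGL2 p" "proj2 p"] proj_hom grp pgrp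
  by (simp add: group_hom.intro group_hom_axioms.intro)

lemma proj_carrier: "g \<in> carrier (GL2 p) \<Longrightarrow> proj2 p g \<in> carrier (PGL2 p)"
  using P_carrier by auto

lemma proj_eq: "g \<in> carrier (GL2 p) \<Longrightarrow> h \<in> carrier (GL2 p) \<Longrightarrow>
    proj2 p g = proj2 p h \<longleftrightarrow> g \<otimes>\<^bsub>GL2 p\<^esub> inv\<^bsub>GL2 p\<^esub> h \<in> scalars p"
proof -
  assume g: "g \<in> carrier (GL2 p)" and h: "h \<in> carrier (GL2 p)"
  interpret G: group "GL2 p" by (rule grp)
  have "proj2 p g = proj2 p h \<longleftrightarrow> g \<in> scalars p #>\<^bsub>GL2 p\<^esub> h"
    unfolding proj2_def
    by (metis G.rcos_self G.repr_independence g h scal_sub)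
  also have "\<dots> \<longleftrightarrow> g \<otimes>\<^bsub>GL2 p\<^esub> inv\<^bsub>GL2 p\<^esub> h \<in> scalars p"
    using subgroup.rcos_module[OF scal_sub grp h g] .
  finally show ?thesis .
qed

lemma proj_one_iff: "g \<in> carrier (GL2 p) \<Longrightarrow> proj2 p g = \<one>\<^bsub>PGL2 p\<^esub> \<longleftrightarrow> g \<in> scalars p"
proof -
  interpret G: group "GL2 p" by (rule grp)
  assume g: "g \<in> carrier (GL2 p)"
  show ?thesis using proj_eq[OF g G.one_closed] proj_one g by simp
qed

end

context pp begin

lemma mod_rng: "x \<in> {0..<p} \<Longrightarrow> x mod p = x"
  by auto

lemma rng_mod: "x mod p \<in> {0..<p}"
  using p0 by auto

lemma mod_eq_dvd: "(x mod p = y mod p) \<longleftrightarrow> p dvd (x - y)"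
  by (simp add: mod_eq_dvd_iff)

lemma rng_eq: "x \<in> {0..<p} \<Longrightarrow> y \<in> {0..<p} \<Longrightarrow> x mod p = y mod p \<Longrightarrow> x = y"
  by auto

lemma rng_nz: "x \<in> {0..<p} \<Longrightarrow> x \<noteq> 0 \<Longrightarrow> x mod p \<noteq> 0"
  by auto

lemma mult_reds: "red p A \<otimes>\<^bsub>GL2 p\<^esub> red p B = red p (mm A B)"
  by (simp add: GL2_mult red_mm_left red_mm_right)

lemma red_id: "a \<in> {0..<p} \<Longrightarrow> b \<in> {0..<p} \<Longrightarrow> c \<in> {0..<p} \<Longrightarrow> d \<in> {0..<p} \<Longrightarrow> red p (a,b,c,d) = (a,b,c,d)"
  by (simp add: red_simp)

lemma invol_form:
  assumes g: "g \<in> carrier (GL2 p)" and gg: "g \<otimes>\<^bsub>GL2 p\<^esub> g \<in> scalars p" and ng: "g \<notin> scalars p"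
  obtains a b c where "g = (a, b, c, (- a) mod p)" "a \<in> {0..<p}" "b \<in> {0..<p}" "c \<in> {0..<p}"
    "(a * a + b * c) mod p \<noteq> 0"
proof -
  obtain a b c d where ge: "g = (a,b,c,d)" by (cases g)
  have r: "a \<in> {0..<p}" "b \<in> {0..<p}" "c \<in> {0..<p}" "d \<in> {0..<p}" and det: "(a * d - b * c) mod p \<noteq> 0"
    using g by (auto simp: ge GL2_def mat2_det_def)
  obtain m where m: "m \<in> {1..<p}" and mm: "red p (mm g g) = (m,0,0,m)"
    using gg by (auto simp: scalars_def GL2_mult)
  have e1: "(a * a + b * c) mod p = m" and e2: "(a * b + b * d) mod p = 0"
    and e3: "(c * a + d * c) mod p = 0" and e4: "(c * b + d * d) mod p = m"
    using mm by (simp_all add: ge mm_simp red_simp)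
  have "p dvd (a + d)"
  proof (rule ccontr)
    assume nd: "\<not> p dvd (a + d)"
    have "p dvd b * (a + d)" using e2 by (simp add: dvd_eq_mod_eq_0 algebra_simps)
    then have "p dvd b" using dvd_prod nd by blast
    then have b0: "b = 0" using r(2) by (auto simp: dvd_eq_mod_eq_0)
    have "p dvd c * (a + d)" using e3 by (simp add: dvd_eq_mod_eq_0 algebra_simps)
    then have "p dvd c" using dvd_prod nd by blast
    then have c0: "c = 0" using r(3) by (auto simp: dvd_eq_mod_eq_0)
    have "(a * a) mod p = (d * d) mod p" using e1 e4 b0 c0 by simp
    then have "p dvd (a - d) * (a + d)" by (simp add: mod_eq_dvd algebra_simps)
    then have "p dvd (a - d)" using dvd_prod nd by blast
    then have ad: "a = d" using r(1,4) rng_eq mod_eq_dvd by blast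
    have "a \<noteq> 0" using det ad b0 c0 by auto
    then have "g \<in> scalars p" using r(1) by (auto simp: ge ad[symmetric] b0 c0 scalars_def)
    then show False using ng by simp
  qed
  then have "d mod p = (- a) mod p" by (simp add: mod_eq_dvd add.commute)
  then have "d = (- a) mod p" using r(4) by simp
  moreover have "(a * a + b * c) mod p \<noteq> 0" using e1 m by auto
  ultimately show ?thesis using that r ge by blast
qed

lemma det_invol: "mat2_det (a, b, c, (- a) mod p) mod p = (- (a * a + b * c)) mod p"
proof -
  have "(a * ((- a) mod p) - b * c) mod p = (a * (- a) - b * c) mod p"
    by (metis mod_diff_left_eq mod_mult_right_eq)
  then show ?thesis by (simp add: mat2_det_def algebra_simps)
qed


lemma neg_rng: "a \<in> {1..<p} \<Longrightarrow> (- a) mod p \<in> {1..<p}"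
proof -
  assume a: "a \<in> {1..<p}"
  have "(- a) mod p \<noteq> 0"
  proof
    assume "(- a) mod p = 0"
    then have "p dvd a" by (simp add: dvd_eq_mod_eq_0[symmetric])
    then show False using a zdvd_not_zless[of a p] by auto
  qed
  then show ?thesis using rng_mod[of "- a"] by auto
qed

lemma neg_ne: "a \<in> {1..<p} \<Longrightarrow> a \<noteq> (- a) mod p"
proof
  assume a: "a \<in> {1..<p}" and e: "a = (- a) mod p"
  then have "a mod p = (- a) mod p" by simp
  then have "p dvd 2 * a" by (simp add: mod_eq_dvd)
  moreover have "(2 * a) mod p \<noteq> 0" using nz_mult[OF two_nz, of a] a by auto
  ultimately show False by (simp add: dvd_eq_mod_eq_0)
qed

lemma split_conj:
  assumes r: "a \<in> {0..<p}" "b \<in> {0..<p}" "c \<in> {0..<p}"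
    and dl: "(a * a + b * c) mod p \<noteq> 0" and qr: "QuadRes p (a * a + b * c)"
  shows "\<exists>h \<in> carrier (GL2 p). \<exists>s t. s \<in> {1..<p} \<and> t \<in> {1..<p} \<and> s \<noteq> t \<and>
     (a, b, c, (- a) mod p) \<otimes>\<^bsub>GL2 p\<^esub> h = h \<otimes>\<^bsub>GL2 p\<^esub> (s, 0, 0, t)"
proof -
  have g: "(a, b, c, (- a) mod p) = red p (a, b, c, - a)" using r by (simp add: red_simp)
  show ?thesis
  proof (cases "b = 0")
    case True
    have a0: "a mod p \<noteq> 0" using dl True by auto
    then have a1: "a \<in> {1..<p}" using r by auto
    let ?h0 = "(2 * a, 0, c, 1)"
    have "mat2_det ?h0 mod p \<noteq> 0" using nz_mult[OF two_nz a0] by (simp add: mat2_det_def)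
    then have hc: "red p ?h0 \<in> carrier (GL2 p)" using red_in_GL2[OF p0] by blast
    have d: "(a, 0, 0, (- a) mod p) = red p (a, 0, 0, - a)" using r by (simp add: red_simp)
    have mme: "mm (a, b, c, - a) ?h0 = mm ?h0 (a, 0, 0, - a)"
      by (simp add: True mm_simp algebra_simps)
    have "(a, b, c, (- a) mod p) \<otimes>\<^bsub>GL2 p\<^esub> red p ?h0 = red p ?h0 \<otimes>\<^bsub>GL2 p\<^esub> (a, 0, 0, (- a) mod p)"
      unfolding g d mult_reds mme ..
    then show ?thesis using hc a1 neg_rng[OF a1] neg_ne[OF a1] by blast
  next
    case False
    then have b0: "b mod p \<noteq> 0" using r by auto
    obtain s0 where s0: "[s0 ^ 2 = a * a + b * c] (mod p)" using qr by (auto simp: QuadRes_def)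
    define s where "s = s0 mod p"
    have ss: "(s * s) mod p = (a * a + b * c) mod p"
      using s0 unfolding s_def cong_def by (simp add: power2_eq_square mod_mult_eq)
    have sdvd: "p dvd (a * a + b * c - s * s)" using ss[symmetric] by (simp add: mod_eq_dvd)
    have s_nz: "s mod p \<noteq> 0"
    proof
      assume "s mod p = 0"
      then have "(s * s) mod p = 0" by (simp add: mod_mult_eq[symmetric])
      then show False using ss dl by simp
    qed
    have s1: "s \<in> {1..<p}" using s_nz rng_mod[of s0] by (auto simp: s_def)
    let ?h0 = "(b, b, s - a, - s - a)"
    have "mat2_det ?h0 = - (2 * b * s)" by (simp add: mat2_det_def algebra_simps)
    moreover have "(2 * b * s) mod p \<noteq> 0" using nz_mult[OF nz_mult[OF two_nz b0] s_nz] by simp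
    ultimately have "mat2_det ?h0 mod p \<noteq> 0" by (metis dvd_eq_mod_eq_0 dvd_minus_iff)
    then have hc: "red p ?h0 \<in> carrier (GL2 p)" using red_in_GL2[OF p0] by blast
    have d: "(s, 0, 0, (- s) mod p) = red p (s, 0, 0, - s)" using s1 by (simp add: red_simp)
    have "red p (mm (a, b, c, - a) ?h0) = red p (mm ?h0 (s, 0, 0, - s))"
    proof -
      have x3: "c * b + - a * (s - a) - (s - a) * s = a * a + b * c - s * s" by (simp add: algebra_simps)
      have x4: "c * b + - a * (- s - a) - (- s - a) * - s = a * a + b * c - s * s" by (simp add: algebra_simps)
      have e3: "(c * b + - a * (s - a)) mod p = ((s - a) * s) mod p"
        unfolding mod_eq_dvd x3 using sdvd .
      have e4: "(c * b + - a * (- s - a)) mod p = ((- s - a) * - s) mod p"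
        unfolding mod_eq_dvd x4 using sdvd .
      have x1: "a * b + b * (s - a) = b * s" "a * b + b * (- s - a) = b * (- s)" by (simp_all add: algebra_simps)
      have "mm (a, b, c, - a) ?h0 = (b * s, b * (- s), c * b + - a * (s - a), c * b + - a * (- s - a))"
        using x1 by (simp add: mm_simp)
      moreover have "mm ?h0 (s, 0, 0, - s) = (b * s, b * (- s), (s - a) * s, (- s - a) * - s)"
        by (simp add: mm_simp)
      ultimately show ?thesis using e3 e4 by (simp add: red_simp)
    qed
    then have "(a, b, c, (- a) mod p) \<otimes>\<^bsub>GL2 p\<^esub> red p ?h0 = red p ?h0 \<otimes>\<^bsub>GL2 p\<^esub> (s, 0, 0, (- s) mod p)"
      unfolding g d mult_reds .
    then show ?thesis using hc s1 neg_rng[OF s1] neg_ne[OF s1] by blast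
  qed
qed

lemma nonsplit_conj:
  assumes r: "a \<in> {0..<p}" "b \<in> {0..<p}" "c \<in> {0..<p}"
    and qr: "\<not> QuadRes p (a * a + b * c)"
  shows "\<exists>h \<in> carrier (GL2 p).
     (a, b, c, (- a) mod p) \<otimes>\<^bsub>GL2 p\<^esub> h = h \<otimes>\<^bsub>GL2 p\<^esub> (0, (a * a + b * c) mod p, 1, 0)"
proof -
  have g: "(a, b, c, (- a) mod p) = red p (a, b, c, - a)" using r by (simp add: red_simp)
  have "c \<noteq> 0"
  proof
    assume "c = 0"
    then have "QuadRes p (a * a + b * c)" unfolding QuadRes_def
      by (intro exI[of _ a]) (simp add: power2_eq_square)
    then show False using qr by simp
  qed
  then have c0: "c mod p \<noteq> 0" using r by auto
  have hr: "red p (1, a, 0, c) = (1, a, 0, c)" using r p3 by (simp add: red_simp)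
  have "mat2_det (1, a, 0, c) mod p \<noteq> 0" using c0 by (simp add: mat2_det_def)
  then have hc: "(1, a, 0, c) \<in> carrier (GL2 p)" using red_in_GL2[OF p0, of "(1, a, 0, c)"] hr by simp
  have J: "(0, (a * a + b * c) mod p, 1, 0) = red p (0, a * a + b * c, 1, 0)" using p3 by (simp add: red_simp)
  have mme: "mm (a, b, c, - a) (1, a, 0, c) = mm (1, a, 0, c) (0, a * a + b * c, 1, 0)"
    by (simp add: mm_simp algebra_simps)
  have "red p (a, b, c, - a) \<otimes>\<^bsub>GL2 p\<^esub> red p (1, a, 0, c) = red p (1, a, 0, c) \<otimes>\<^bsub>GL2 p\<^esub> red p (0, a * a + b * c, 1, 0)"
    unfolding mult_reds mme ..
  then have "(a, b, c, (- a) mod p) \<otimes>\<^bsub>GL2 p\<^esub> (1, a, 0, c) = (1, a, 0, c) \<otimes>\<^bsub>GL2 p\<^esub> (0, (a * a + b * c) mod p, 1, 0)"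
    using g J hr by simp
  then show ?thesis using hc by blast
qed


lemma cent_diag:
  assumes s: "s \<in> {1..<p}" and t: "t \<in> {1..<p}" and st: "s \<noteq> t"
  shows "{m \<in> carrier (GL2 p). m \<otimes>\<^bsub>GL2 p\<^esub> (s, 0, 0, t) = (s, 0, 0, t) \<otimes>\<^bsub>GL2 p\<^esub> m} = diag_torus p"
proof (intro equalityI subsetI)
  fix m assume "m \<in> {m \<in> carrier (GL2 p). m \<otimes>\<^bsub>GL2 p\<^esub> (s, 0, 0, t) = (s, 0, 0, t) \<otimes>\<^bsub>GL2 p\<^esub> m}"
  then have mc: "m \<in> carrier (GL2 p)" and e: "m \<otimes>\<^bsub>GL2 p\<^esub> (s, 0, 0, t) = (s, 0, 0, t) \<otimes>\<^bsub>GL2 p\<^esub> m" by auto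
  obtain x y z w where me: "m = (x, y, z, w)" by (cases m)
  have r: "x \<in> {0..<p}" "y \<in> {0..<p}" "z \<in> {0..<p}" "w \<in> {0..<p}" and det: "(x * w - y * z) mod p \<noteq> 0"
    using mc by (auto simp: me GL2_def mat2_det_def)
  have "mm (x, y, z, w) (s, 0, 0, t) = (x * s, y * t, z * s, w * t)" by (simp add: mm_simp)
  moreover have "mm (s, 0, 0, t) (x, y, z, w) = (s * x, s * y, t * z, t * w)" by (simp add: mm_simp)
  ultimately have e2: "(y * t) mod p = (s * y) mod p" and e3: "(z * s) mod p = (t * z) mod p"
    using e by (simp_all add: me GL2_mult red_simp)
  have nst: "\<not> p dvd (t - s)"
  proof
    assume "p dvd (t - s)"
    then have "t mod p = s mod p" by (simp add: mod_eq_dvd)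
    then show False using s t st by simp
  qed
  have "p dvd y * (t - s)" using e2 by (simp add: mod_eq_dvd algebra_simps)
  then have "p dvd y" using dvd_prod nst by blast
  then have y0: "y = 0" using r(2) by (auto simp: dvd_eq_mod_eq_0)
  have "p dvd z * (t - s)" using e3[symmetric] by (simp add: mod_eq_dvd algebra_simps)
  then have "p dvd z" using dvd_prod nst by blast
  then have z0: "z = 0" using r(3) by (auto simp: dvd_eq_mod_eq_0)
  have "x \<noteq> 0" "w \<noteq> 0" using det y0 z0 by auto
  then show "m \<in> diag_torus p" using r by (auto simp: me y0 z0 diag_torus_def)
next
  fix m assume "m \<in> diag_torus p"
  then obtain x w where me: "m = (x, 0, 0, w)" and x: "x \<in> {1..<p}" and w: "w \<in> {1..<p}"
    by (auto simp: diag_torus_def)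
  have "(x * w) mod p \<noteq> 0" using nz_mult[of x w] x w by auto
  then have "m \<in> carrier (GL2 p)" using x w by (simp add: me GL2_def mat2_det_def)
  moreover have "m \<otimes>\<^bsub>GL2 p\<^esub> (s, 0, 0, t) = (s, 0, 0, t) \<otimes>\<^bsub>GL2 p\<^esub> m"
    by (simp add: me GL2_mult mm_simp mult.commute)
  ultimately show "m \<in> {m \<in> carrier (GL2 p). m \<otimes>\<^bsub>GL2 p\<^esub> (s, 0, 0, t) = (s, 0, 0, t) \<otimes>\<^bsub>GL2 p\<^esub> m}"
    by blast
qed

lemma nqr_nz: "\<not> QuadRes p e \<Longrightarrow> e mod p \<noteq> 0"
  unfolding QuadRes_def cong_def by (metis mod_0 power_zero_numeral)

lemma nonsplit_det:
  assumes e: "\<not> QuadRes p e" and a: "a \<in> {0..<p}" and b: "b \<in> {0..<p}" and ab: "(a, b) \<noteq> (0, 0)"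
  shows "(a * a - (b * e) mod p * b) mod p \<noteq> 0"
proof
  assume h: "(a * a - (b * e) mod p * b) mod p = 0"
  have "(a * a - (b * e) mod p * b) mod p = (a * a - e * b * b) mod p"
    by (metis mod_diff_right_eq mod_mult_left_eq mult.commute mult.assoc)
  then have d: "p dvd (a * a - e * b * b)" using h by (simp add: dvd_eq_mod_eq_0)
  show False
  proof (cases "b = 0")
    case True
    then have "p dvd a * a" using d by simp
    then have "p dvd a" using dvd_prod by blast
    then have "a = 0" using a by (auto simp: dvd_eq_mod_eq_0)
    then show False using ab True by simp
  next
    case False
    then have "b \<in> {1..<p}" using b by auto
    then obtain v where v: "(v * b) mod p = 1" using scal_inv by blast
    have "[a * a = e * b * b] (mod p)" using d by (simp add: cong_iff_dvd_diff cong_sym_eq)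
    then have "[a * a * (v * v) = e * b * b * (v * v)] (mod p)" by (rule cong_mult) simp
    moreover have "e * b * b * (v * v) = e * ((v * b) * (v * b))" by (simp add: algebra_simps)
    moreover have "[e * ((v * b) * (v * b)) = e * (1 * 1)] (mod p)"
      using v unfolding cong_def by (metis mod_mult_eq mod_mult_right_eq)
    ultimately have "[a * a * (v * v) = e] (mod p)"
      by (metis cong_trans mult_1 mult_1_right)
    moreover have "(a * v) ^ 2 = a * a * (v * v)" by (simp add: power2_eq_square algebra_simps)
    ultimately have "[(a * v) ^ 2 = e] (mod p)" by simp
    then have "QuadRes p e" unfolding QuadRes_def by blast
    then show False using e by simp
  qed
qed

lemma cent_J:
  assumes e: "\<not> QuadRes p e"
  shows "{m \<in> carrier (GL2 p). m \<otimes>\<^bsub>GL2 p\<^esub> (0, e mod p, 1, 0) = (0, e mod p, 1, 0) \<otimes>\<^bsub>GL2 p\<^esub> m}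
     = nonsplit_torus p e"
proof (intro equalityI subsetI)
  have e0: "e mod p \<noteq> 0" using nqr_nz[OF e] .
  fix m assume "m \<in> {m \<in> carrier (GL2 p). m \<otimes>\<^bsub>GL2 p\<^esub> (0, e mod p, 1, 0) = (0, e mod p, 1, 0) \<otimes>\<^bsub>GL2 p\<^esub> m}"
  then have mc: "m \<in> carrier (GL2 p)" and eq: "m \<otimes>\<^bsub>GL2 p\<^esub> (0, e mod p, 1, 0) = (0, e mod p, 1, 0) \<otimes>\<^bsub>GL2 p\<^esub> m" by auto
  obtain x y z w where me: "m = (x, y, z, w)" by (cases m)
  have r: "x \<in> {0..<p}" "y \<in> {0..<p}" "z \<in> {0..<p}" "w \<in> {0..<p}" and det: "(x * w - y * z) mod p \<noteq> 0"
    using mc by (auto simp: me GL2_def mat2_det_def)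
  have "mm (x, y, z, w) (0, e mod p, 1, 0) = (y, x * (e mod p), w, z * (e mod p))" by (simp add: mm_simp)
  moreover have "mm (0, e mod p, 1, 0) (x, y, z, w) = ((e mod p) * z, (e mod p) * w, x, y)" by (simp add: mm_simp)
  ultimately have e1: "y mod p = ((e mod p) * z) mod p" and e3: "w mod p = x mod p"
    using eq by (simp_all add: me GL2_mult red_simp)
  have wx: "w = x" using e3 r by simp
  have "((e mod p) * z) mod p = (z * e) mod p" by (metis mod_mult_left_eq mult.commute)
  then have "y = (z * e) mod p" using e1 r by simp
  moreover have "(x, z) \<noteq> (0, 0)" using det wx by auto
  ultimately show "m \<in> nonsplit_torus p e" using r by (auto simp: me wx nonsplit_torus_def)
next
  fix m assume "m \<in> nonsplit_torus p e"
  then obtain a b where me: "m = (a, (b * e) mod p, b, a)" and a: "a \<in> {0..<p}" and b: "b \<in> {0..<p}"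
    and ab: "(a, b) \<noteq> (0, 0)" by (auto simp: nonsplit_torus_def)
  have "m \<in> carrier (GL2 p)" using nonsplit_det[OF e a b ab] a b rng_mod[of "b * e"]
    by (simp add: me GL2_def mat2_det_def)
  moreover have "m \<otimes>\<^bsub>GL2 p\<^esub> (0, e mod p, 1, 0) = (0, e mod p, 1, 0) \<otimes>\<^bsub>GL2 p\<^esub> m"
  proof -
    have f1: "(b * (e mod p)) mod p = (b * e) mod p" by (rule mod_mult_right_eq)
    have f2: "((e mod p) * b) mod p = (b * e) mod p" by (metis mod_mult_left_eq mult.commute)
    have f3: "((e mod p) * a) mod p = (a * (e mod p)) mod p" by (simp add: mult.commute)
    show ?thesis by (simp add: me GL2_mult mm_simp red_simp f1 f2 f3)
  qed
  ultimately show "m \<in> {m \<in> carrier (GL2 p). m \<otimes>\<^bsub>GL2 p\<^esub> (0, e mod p, 1, 0) = (0, e mod p, 1, 0) \<otimes>\<^bsub>GL2 p\<^esub> m}"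
    by blast
qed

end
context pp begin

abbreviation "cent g \<equiv> {m \<in> carrier (GL2 p). m \<otimes>\<^bsub>GL2 p\<^esub> g = g \<otimes>\<^bsub>GL2 p\<^esub> m}"

lemma conj_eq:
  assumes g: "g \<in> carrier (GL2 p)" and h: "h \<in> carrier (GL2 p)" and d: "d \<in> carrier (GL2 p)"
    and e: "g \<otimes>\<^bsub>GL2 p\<^esub> h = h \<otimes>\<^bsub>GL2 p\<^esub> d"
  shows "conjugate_set p h {m \<in> carrier (GL2 p). m \<otimes>\<^bsub>GL2 p\<^esub> d = d \<otimes>\<^bsub>GL2 p\<^esub> m} = cent g"
proof -
  interpret G: group "GL2 p" by (rule grp)
  have "h \<otimes>\<^bsub>GL2 p\<^esub> d \<otimes>\<^bsub>GL2 p\<^esub> inv\<^bsub>GL2 p\<^esub> h = g \<otimes>\<^bsub>GL2 p\<^esub> h \<otimes>\<^bsub>GL2 p\<^esub> inv\<^bsub>GL2 p\<^esub> h"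
    using e by simp
  also have "\<dots> = g" using g h by (simp add: G.m_assoc)
  finally have gh: "h \<otimes>\<^bsub>GL2 p\<^esub> d \<otimes>\<^bsub>GL2 p\<^esub> inv\<^bsub>GL2 p\<^esub> h = g" .
  show ?thesis unfolding conjugate_set_def G.conj_centralizer[OF h d] gh ..
qed

lemma cartan_of_invol:
  assumes r: "a \<in> {0..<p}" "b \<in> {0..<p}" "c \<in> {0..<p}"
    and dl: "(a * a + b * c) mod p \<noteq> 0" and ge: "g = (a, b, c, (- a) mod p)"
    and gc: "g \<in> carrier (GL2 p)"
  shows "(QuadRes p (a * a + b * c) \<longrightarrow> split_cartan p (cent g))
       \<and> (\<not> QuadRes p (a * a + b * c) \<longrightarrow> nonsplit_cartan p (cent g))"
proof (intro conjI impI)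
  assume q: "QuadRes p (a * a + b * c)"
  obtain h s t where h: "h \<in> carrier (GL2 p)" and s: "s \<in> {1..<p}" and t: "t \<in> {1..<p}" and st: "s \<noteq> t"
    and e: "g \<otimes>\<^bsub>GL2 p\<^esub> h = h \<otimes>\<^bsub>GL2 p\<^esub> (s, 0, 0, t)"
    using split_conj[OF r dl q] ge by blast
  have "(s, 0, 0, t) \<in> diag_torus p" using s t by (auto simp: diag_torus_def)
  then have dc: "(s, 0, 0, t) \<in> carrier (GL2 p)" using cent_diag[OF s t st] by blast
  have "conjugate_set p h (diag_torus p) = cent g"
    using conj_eq[OF gc h dc e] cent_diag[OF s t st] by simp
  then show "split_cartan p (cent g)" using h unfolding split_cartan_def by metis
next
  assume q: "\<not> QuadRes p (a * a + b * c)"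
  let ?e = "a * a + b * c"
  obtain h where h: "h \<in> carrier (GL2 p)"
    and e: "g \<otimes>\<^bsub>GL2 p\<^esub> h = h \<otimes>\<^bsub>GL2 p\<^esub> (0, ?e mod p, 1, 0)"
    using nonsplit_conj[OF r q] ge by blast
  have "(0, ?e mod p, 1, 0) \<in> nonsplit_torus p ?e" unfolding nonsplit_torus_def using p3 by force
  then have dc: "(0, ?e mod p, 1, 0) \<in> carrier (GL2 p)" using cent_J[OF q] by blast
  have "conjugate_set p h (nonsplit_torus p ?e) = cent g"
    using conj_eq[OF gc h dc e] cent_J[OF q] by simp
  then show "nonsplit_cartan p (cent g)" using h q unfolding nonsplit_cartan_def by metis
qed

lemma cent_normal:
  assumes g: "g \<in> carrier (GL2 p)" and k: "k \<in> carrier (GL2 p)"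
    and c: "proj2 p k \<otimes>\<^bsub>PGL2 p\<^esub> proj2 p g = proj2 p g \<otimes>\<^bsub>PGL2 p\<^esub> proj2 p k"
  shows "conjugate_set p k (cent g) = cent g"
proof -
  interpret G: group "GL2 p" by (rule grp)
  have "proj2 p (k \<otimes>\<^bsub>GL2 p\<^esub> g) = proj2 p (g \<otimes>\<^bsub>GL2 p\<^esub> k)"
    using c proj_mult g k by simp
  then have sZ: "(k \<otimes>\<^bsub>GL2 p\<^esub> g) \<otimes>\<^bsub>GL2 p\<^esub> inv\<^bsub>GL2 p\<^esub> (g \<otimes>\<^bsub>GL2 p\<^esub> k) \<in> scalars p"
    using proj_eq g k by simp
  define s where "s = (k \<otimes>\<^bsub>GL2 p\<^esub> g) \<otimes>\<^bsub>GL2 p\<^esub> inv\<^bsub>GL2 p\<^esub> (g \<otimes>\<^bsub>GL2 p\<^esub> k)"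
  have sc: "s \<in> carrier (GL2 p)" using g k by (simp add: s_def)
  have kg: "k \<otimes>\<^bsub>GL2 p\<^esub> g = s \<otimes>\<^bsub>GL2 p\<^esub> (g \<otimes>\<^bsub>GL2 p\<^esub> k)"
    using g k by (simp add: s_def G.m_assoc)
  have "k \<otimes>\<^bsub>GL2 p\<^esub> g \<otimes>\<^bsub>GL2 p\<^esub> inv\<^bsub>GL2 p\<^esub> k = s \<otimes>\<^bsub>GL2 p\<^esub> g"
    using kg g k sc by (simp add: G.m_assoc)
  then show ?thesis
    unfolding conjugate_set_def G.conj_centralizer[OF k g]
    using G.centralizer_scale[OF sc g] scal_central sZ unfolding s_def by simp
qed

lemma norm_of_conj:
  assumes T: "T \<subseteq> carrier (GL2 p)" and k: "k \<in> carrier (GL2 p)" and c: "conjugate_set p k T = T"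
  shows "proj2 p k \<in> normalizer (PGL2 p) (proj2 p ` T)"
proof -
  interpret G: group "GL2 p" by (rule grp)
  have sub: "proj2 p ` T \<subseteq> carrier (PGL2 p)" using T proj_carrier by auto
  have "proj2 p k <#\<^bsub>PGL2 p\<^esub> (proj2 p ` T) #>\<^bsub>PGL2 p\<^esub> inv\<^bsub>PGL2 p\<^esub> (proj2 p k)
      = proj2 p ` conjugate_set p k T"
  proof -
    have "proj2 p k \<otimes>\<^bsub>PGL2 p\<^esub> proj2 p t \<otimes>\<^bsub>PGL2 p\<^esub> inv\<^bsub>PGL2 p\<^esub> (proj2 p k)
        = proj2 p (k \<otimes>\<^bsub>GL2 p\<^esub> t \<otimes>\<^bsub>GL2 p\<^esub> inv\<^bsub>GL2 p\<^esub> k)" if t: "t \<in> T" for t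
      using t T k by (simp add: proj_mult proj_inv subsetD)
    then show ?thesis
      unfolding l_coset_def r_coset_def conjugate_set_def by auto
  qed
  then show ?thesis using c sub proj_carrier[OF k]
    unfolding normalizer_def stabilizer_def by auto
qed


lemma leg_cong: "a mod p = b mod p \<Longrightarrow> Legendre a p = Legendre b p"
  unfolding Legendre_def QuadRes_def cong_def by simp

lemma leg_pm: "a mod p \<noteq> 0 \<Longrightarrow> Legendre a p = 1 \<or> Legendre a p = -1"
  unfolding Legendre_def cong_def by simp

lemma leg_sq: "a mod p \<noteq> 0 \<Longrightarrow> Legendre a p * Legendre a p = 1"
proof -
  assume "a mod p \<noteq> 0"
  then have "Legendre a p = 1 \<or> Legendre a p = -1" by (rule leg_pm)
  then show ?thesis by auto
qed

lemma det_mult: "mat2_det (x \<otimes>\<^bsub>GL2 p\<^esub> y) mod p = (mat2_det x * mat2_det y) mod p"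
  by (simp add: GL2_mult det_red det_mm)

lemma leg_det_mult: "Legendre (mat2_det (x \<otimes>\<^bsub>GL2 p\<^esub> y)) p = Legendre (mat2_det x) p * Legendre (mat2_det y) p"
  using leg_cong[OF det_mult] leg_mult[OF pr od] by simp

lemma PSL_iff:
  assumes g: "g \<in> carrier (GL2 p)"
  shows "proj2 p g \<in> PSL2 p \<longleftrightarrow> Legendre (mat2_det g) p = 1"
proof
  assume "Legendre (mat2_det g) p = 1"
  then have "QuadRes p (mat2_det g)" using qr_iff_leg GL2_det[OF g] by simp
  then show "proj2 p g \<in> PSL2 p" using g unfolding PSL2_def by blast
next
  interpret G: group "GL2 p" by (rule grp)
  assume "proj2 p g \<in> PSL2 p"
  then obtain g' where g': "g' \<in> carrier (GL2 p)" and q: "QuadRes p (mat2_det g')" and e: "proj2 p g = proj2 p g'"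
    unfolding PSL2_def by auto
  have "g' \<otimes>\<^bsub>GL2 p\<^esub> inv\<^bsub>GL2 p\<^esub> g \<in> scalars p" using e proj_eq[OF g' g] by simp
  then obtain l where l: "l \<in> {1..<p}" and zl: "g' \<otimes>\<^bsub>GL2 p\<^esub> inv\<^bsub>GL2 p\<^esub> g = (l, 0, 0, l)"
    by (auto simp: scalars_def)
  have "g' = (l, 0, 0, l) \<otimes>\<^bsub>GL2 p\<^esub> g" using zl[symmetric] g g' by (simp add: G.m_assoc)
  then have "Legendre (mat2_det g') p = Legendre (l * l) p * Legendre (mat2_det g) p"
    using leg_det_mult by (simp add: mat2_det_def)
  moreover have "Legendre (l * l) p = 1"
    using leg_mult[OF pr od] leg_sq[of l] l by auto
  moreover have "Legendre (mat2_det g') p = 1" using qr_iff_leg GL2_det[OF g'] q by simp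
  ultimately show "Legendre (mat2_det g) p = 1" by simp
qed

lemma classify:
  assumes g: "g \<in> carrier (GL2 p)" and gg: "g \<otimes>\<^bsub>GL2 p\<^esub> g \<in> scalars p" and ng: "g \<notin> scalars p"
  shows "(Legendre (-1) p * Legendre (mat2_det g) p = 1 \<longrightarrow> split_cartan p (cent g))
       \<and> (Legendre (-1) p * Legendre (mat2_det g) p \<noteq> 1 \<longrightarrow> nonsplit_cartan p (cent g))"
proof -
  obtain a b c where ge: "g = (a, b, c, (- a) mod p)" and r: "a \<in> {0..<p}" "b \<in> {0..<p}" "c \<in> {0..<p}"
    and dl: "(a * a + b * c) mod p \<noteq> 0"
    using invol_form[OF g gg ng] by blast
  let ?d = "a * a + b * c"
  have "mat2_det g mod p = ((-1) * ?d) mod p" using det_invol ge by simp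
  then have "Legendre (mat2_det g) p = Legendre (-1) p * Legendre ?d p"
    using leg_cong leg_mult[OF pr od] by metis
  moreover have "Legendre (-1) p * Legendre (-1) p = 1"
    using leg_sq[of "-1"] p3 by (simp add: zmod_minus1)
  ultimately have L: "Legendre (-1) p * Legendre (mat2_det g) p = Legendre ?d p"
    by (metis mult.assoc mult_1)
  have "QuadRes p ?d \<longleftrightarrow> Legendre ?d p = 1" using qr_iff_leg dl by blast
  then show ?thesis using cartan_of_invol[OF r dl ge g] L by simp
qed

lemma cent_one: "g \<in> carrier (GL2 p) \<Longrightarrow> \<one>\<^bsub>GL2 p\<^esub> \<in> cent g"
proof -
  interpret G: group "GL2 p" by (rule grp)
  assume g: "g \<in> carrier (GL2 p)"
  have "\<one>\<^bsub>GL2 p\<^esub> \<otimes>\<^bsub>GL2 p\<^esub> g = g \<otimes>\<^bsub>GL2 p\<^esub> \<one>\<^bsub>GL2 p\<^esub>" using g by simp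
  then show ?thesis by simp
qed

lemma cent_self: "g \<in> carrier (GL2 p) \<Longrightarrow> g \<in> cent g"
  by simp

lemma cent_sub: "cent g \<subseteq> carrier (GL2 p)"
  by auto

lemma invol_lift:
  assumes x: "x = proj2 p g" and g: "g \<in> carrier (GL2 p)" and xx: "x \<otimes>\<^bsub>PGL2 p\<^esub> x = \<one>\<^bsub>PGL2 p\<^esub>"
    and x1: "x \<noteq> \<one>\<^bsub>PGL2 p\<^esub>"
  shows "g \<otimes>\<^bsub>GL2 p\<^esub> g \<in> scalars p" "g \<notin> scalars p"
proof -
  interpret G: group "GL2 p" by (rule grp)
  have gg: "g \<otimes>\<^bsub>GL2 p\<^esub> g \<in> carrier (GL2 p)" using g by simp
  have "proj2 p (g \<otimes>\<^bsub>GL2 p\<^esub> g) = \<one>\<^bsub>PGL2 p\<^esub>" using xx x proj_mult[OF g g] by simp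
  then show "g \<otimes>\<^bsub>GL2 p\<^esub> g \<in> scalars p" using proj_one_iff[OF gg] by blast
  show "g \<notin> scalars p" using x1 x proj_one_iff[OF g] by blast
qed


lemma V_sq: "v \<otimes>\<^bsub>integer_mod_group 2 \<times>\<times> integer_mod_group 2\<^esub> v = (0, 0)"
proof -
  have a2: "\<And>a::int. (a + a) mod 2 = 0" by presburger
  show ?thesis unfolding mult_DirProd' mult_integer_mod_group using a2 by simp
qed

lemma V_comm: "v \<otimes>\<^bsub>integer_mod_group 2 \<times>\<times> integer_mod_group 2\<^esub> w = w \<otimes>\<^bsub>integer_mod_group 2 \<times>\<times> integer_mod_group 2\<^esub> v"
  unfolding mult_DirProd' mult_integer_mod_group by (simp add: add.commute)

lemma V_card: "card (carrier (integer_mod_group 2 \<times>\<times> integer_mod_group 2)) = 4"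
proof -
  have "carrier (integer_mod_group 2 \<times>\<times> integer_mod_group 2) = {0..<2} \<times> {0..<2}"
    by (simp add: carrier_integer_mod_group)
  then show ?thesis by simp
qed

lemma N_struct:
  assumes sub: "subgroup N (PGL2 p)"
    and iso: "(PGL2 p)\<lparr>carrier := N\<rparr> \<cong> integer_mod_group 2 \<times>\<times> integer_mod_group 2"
  shows "card N = 4" "\<And>x. x \<in> N \<Longrightarrow> x \<otimes>\<^bsub>PGL2 p\<^esub> x = \<one>\<^bsub>PGL2 p\<^esub>"
    "\<And>x y. x \<in> N \<Longrightarrow> y \<in> N \<Longrightarrow> x \<otimes>\<^bsub>PGL2 p\<^esub> y = y \<otimes>\<^bsub>PGL2 p\<^esub> x"
proof -
  let ?V = "integer_mod_group 2 \<times>\<times> integer_mod_group 2"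
  obtain f where f: "f \<in> iso ((PGL2 p)\<lparr>carrier := N\<rparr>) ?V" using iso unfolding is_iso_def by blast
  have fh: "f \<in> hom ((PGL2 p)\<lparr>carrier := N\<rparr>) ?V" using f unfolding iso_def by blast
  have hm: "\<And>x y. x \<in> N \<Longrightarrow> y \<in> N \<Longrightarrow> f (x \<otimes>\<^bsub>PGL2 p\<^esub> y) = f x \<otimes>\<^bsub>?V\<^esub> f y"
  proof -
    fix x y assume "x \<in> N" "y \<in> N"
    then have "f (x \<otimes>\<^bsub>(PGL2 p)\<lparr>carrier := N\<rparr>\<^esub> y) = f x \<otimes>\<^bsub>?V\<^esub> f y"
      using hom_mult[OF fh] by simp
    then show "f (x \<otimes>\<^bsub>PGL2 p\<^esub> y) = f x \<otimes>\<^bsub>?V\<^esub> f y" by simp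
  qed
  have "bij_betw f (carrier ((PGL2 p)\<lparr>carrier := N\<rparr>)) (carrier ?V)" using f unfolding iso_def by blast
  then have bij: "bij_betw f N (carrier ?V)" by simp
  have inj: "inj_on f N" using bij unfolding bij_betw_def by blast
  have one: "\<one>\<^bsub>PGL2 p\<^esub> \<in> N" using subgroup.one_closed[OF sub] .
  have mc: "\<And>x y. x \<in> N \<Longrightarrow> y \<in> N \<Longrightarrow> x \<otimes>\<^bsub>PGL2 p\<^esub> y \<in> N" using subgroup.m_closed[OF sub] .
  have oo: "\<one>\<^bsub>PGL2 p\<^esub> \<otimes>\<^bsub>PGL2 p\<^esub> \<one>\<^bsub>PGL2 p\<^esub> = \<one>\<^bsub>PGL2 p\<^esub>"
    by (rule monoid.l_one[OF group.is_monoid[OF pgrp] monoid.one_closed[OF group.is_monoid[OF pgrp]]])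
  show "card N = 4" using bij_betw_same_card[OF bij] V_card by simp
  show "\<And>x. x \<in> N \<Longrightarrow> x \<otimes>\<^bsub>PGL2 p\<^esub> x = \<one>\<^bsub>PGL2 p\<^esub>"
  proof -
    fix x assume x: "x \<in> N"
    have "f (x \<otimes>\<^bsub>PGL2 p\<^esub> x) = f (\<one>\<^bsub>PGL2 p\<^esub> \<otimes>\<^bsub>PGL2 p\<^esub> \<one>\<^bsub>PGL2 p\<^esub>)"
      unfolding hm[OF x x] hm[OF one one] V_sq ..
    then have "x \<otimes>\<^bsub>PGL2 p\<^esub> x = \<one>\<^bsub>PGL2 p\<^esub> \<otimes>\<^bsub>PGL2 p\<^esub> \<one>\<^bsub>PGL2 p\<^esub>"
      using inj mc[OF x x] mc[OF one one] unfolding inj_on_def by blast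
    then show "x \<otimes>\<^bsub>PGL2 p\<^esub> x = \<one>\<^bsub>PGL2 p\<^esub>" using oo by simp
  qed
  show "\<And>x y. x \<in> N \<Longrightarrow> y \<in> N \<Longrightarrow> x \<otimes>\<^bsub>PGL2 p\<^esub> y = y \<otimes>\<^bsub>PGL2 p\<^esub> x"
  proof -
    fix x y assume x: "x \<in> N" and y: "y \<in> N"
    have "f (x \<otimes>\<^bsub>PGL2 p\<^esub> y) = f (y \<otimes>\<^bsub>PGL2 p\<^esub> x)"
      unfolding hm[OF x y] hm[OF y x] by (rule V_comm)
    then show "x \<otimes>\<^bsub>PGL2 p\<^esub> y = y \<otimes>\<^bsub>PGL2 p\<^esub> x"
      using inj mc[OF x y] mc[OF y x] unfolding inj_on_def by blast
  qed
qed

lemma idx2: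
  assumes sub: "subgroup N (PGL2 p)" and c4: "card N = 4"
    and sq: "\<And>x. x \<in> N \<Longrightarrow> x \<otimes>\<^bsub>PGL2 p\<^esub> x = \<one>\<^bsub>PGL2 p\<^esub>"
  shows "index2_subgroups p N = (\<lambda>x. {\<one>\<^bsub>PGL2 p\<^esub>, x}) ` (N - {\<one>\<^bsub>PGL2 p\<^esub>})"
proof (intro equalityI subsetI)
  fix C assume "C \<in> index2_subgroups p N"
  then have "subgroup C (PGL2 p) \<and> C \<subseteq> N \<and> card N = 2 * card C" unfolding index2_subgroups_def by simp
  then have C: "subgroup C (PGL2 p)" "C \<subseteq> N" "card N = 2 * card C" by blast+
  then have c2: "card C = 2" using c4 by simp
  have o: "\<one>\<^bsub>PGL2 p\<^esub> \<in> C" using subgroup.one_closed[OF C(1)] .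
  have fC: "finite C" using c2 card.infinite by fastforce
  have "card (C - {\<one>\<^bsub>PGL2 p\<^esub>}) = 1" using c2 o fC by (simp add: card_Diff_singleton)
  then obtain x where x: "C - {\<one>\<^bsub>PGL2 p\<^esub>} = {x}" by (rule card_1_singletonE)
  then have Ce: "C = {\<one>\<^bsub>PGL2 p\<^esub>, x}" using o by blast
  have "x \<in> N - {\<one>\<^bsub>PGL2 p\<^esub>}" using x C(2) by blast
  then show "C \<in> (\<lambda>x. {\<one>\<^bsub>PGL2 p\<^esub>, x}) ` (N - {\<one>\<^bsub>PGL2 p\<^esub>})" using Ce by blast
next
  fix C assume "C \<in> (\<lambda>x. {\<one>\<^bsub>PGL2 p\<^esub>, x}) ` (N - {\<one>\<^bsub>PGL2 p\<^esub>})"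
  then obtain x where x: "x \<in> N" "x \<noteq> \<one>\<^bsub>PGL2 p\<^esub>" and C: "C = {\<one>\<^bsub>PGL2 p\<^esub>, x}" by blast
  have xc: "x \<in> carrier (PGL2 p)" using x subgroup.subset[OF sub] by blast
  interpret P: group "PGL2 p" by (rule pgrp)
  have ix: "inv\<^bsub>PGL2 p\<^esub> x = x" using P.inv_equality[OF sq[OF x(1)] xc xc] .
  have xx: "x \<otimes>\<^bsub>PGL2 p\<^esub> x = \<one>\<^bsub>PGL2 p\<^esub>" using sq[OF x(1)] .
  have "subgroup C (PGL2 p)"
  proof (rule P.subgroupI)
    show "C \<subseteq> carrier (PGL2 p)" using xc unfolding C by simp
    show "C \<noteq> {}" unfolding C by simp
    show "\<And>a. a \<in> C \<Longrightarrow> inv\<^bsub>PGL2 p\<^esub> a \<in> C"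
    proof -
      fix a assume "a \<in> C"
      then have "a = \<one>\<^bsub>PGL2 p\<^esub> \<or> a = x" unfolding C by simp
      then show "inv\<^bsub>PGL2 p\<^esub> a \<in> C"
      proof
        assume "a = \<one>\<^bsub>PGL2 p\<^esub>" then show ?thesis unfolding C by simp
      next
        assume "a = x" then show ?thesis unfolding C using ix by simp
      qed
    qed
    show "\<And>a b. a \<in> C \<Longrightarrow> b \<in> C \<Longrightarrow> a \<otimes>\<^bsub>PGL2 p\<^esub> b \<in> C"
    proof -
      fix a b assume "a \<in> C" "b \<in> C"
      then have "a = \<one>\<^bsub>PGL2 p\<^esub> \<or> a = x" "b = \<one>\<^bsub>PGL2 p\<^esub> \<or> b = x" unfolding C by simp_all
      then show "a \<otimes>\<^bsub>PGL2 p\<^esub> b \<in> C"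
        unfolding C using xc xx by (elim disjE) simp_all
    qed
  qed
  moreover have "card C = 2" unfolding C using x(2) by simp
  moreover have "C \<subseteq> N" unfolding C using x(1) subgroup.one_closed[OF sub] by simp
  ultimately show "C \<in> index2_subgroups p N" unfolding index2_subgroups_def using c4 by simp
qed


lemma mod4: "[p = 3] (mod 4) \<Longrightarrow> \<not> [p = 1] (mod 4)"
  unfolding cong_def by simp

lemma Lm1: "Legendre (-1) p = (if [p = 1] (mod 4) then 1 else -1)"
  using leg_minus1[OF pr od] .

lemma invol_cartan:
  assumes g: "g \<in> carrier (GL2 p)" and xx: "proj2 p g \<otimes>\<^bsub>PGL2 p\<^esub> proj2 p g = \<one>\<^bsub>PGL2 p\<^esub>"
    and x1: "proj2 p g \<noteq> \<one>\<^bsub>PGL2 p\<^esub>"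
  shows "{\<one>\<^bsub>PGL2 p\<^esub>, proj2 p g} \<subseteq> proj2 p ` cent g"
    "Legendre (-1) p * Legendre (mat2_det g) p = 1 \<Longrightarrow> split_cartan p (cent g)"
    "Legendre (-1) p * Legendre (mat2_det g) p \<noteq> 1 \<Longrightarrow> nonsplit_cartan p (cent g)"
proof -
  have gg: "g \<otimes>\<^bsub>GL2 p\<^esub> g \<in> scalars p" and ng: "g \<notin> scalars p"
    using invol_lift[OF refl g xx x1] by blast+
  show "{\<one>\<^bsub>PGL2 p\<^esub>, proj2 p g} \<subseteq> proj2 p ` cent g"
    using cent_one[OF g] cent_self[OF g] g proj_one[symmetric] by blast
  show "Legendre (-1) p * Legendre (mat2_det g) p = 1 \<Longrightarrow> split_cartan p (cent g)"
    using classify[OF g gg ng] by blast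
  show "Legendre (-1) p * Legendre (mat2_det g) p \<noteq> 1 \<Longrightarrow> nonsplit_cartan p (cent g)"
    using classify[OF g gg ng] by blast
qed

lemma elem_class:
  assumes g: "g \<in> carrier (GL2 p)" and xx: "proj2 p g \<otimes>\<^bsub>PGL2 p\<^esub> proj2 p g = \<one>\<^bsub>PGL2 p\<^esub>"
    and x1: "proj2 p g \<noteq> \<one>\<^bsub>PGL2 p\<^esub>"
  shows "Legendre (mat2_det g) p = 1 \<Longrightarrow>
           ([p = 1] (mod 4) \<longrightarrow> in_split_cartan p {\<one>\<^bsub>PGL2 p\<^esub>, proj2 p g})
         \<and> ([p = 3] (mod 4) \<longrightarrow> in_nonsplit_cartan p {\<one>\<^bsub>PGL2 p\<^esub>, proj2 p g})"
    "Legendre (mat2_det g) p \<noteq> 1 \<Longrightarrow>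
           ([p = 1] (mod 4) \<longrightarrow> in_nonsplit_cartan p {\<one>\<^bsub>PGL2 p\<^esub>, proj2 p g})
         \<and> ([p = 3] (mod 4) \<longrightarrow> in_split_cartan p {\<one>\<^bsub>PGL2 p\<^esub>, proj2 p g})"
proof -
  note ic = invol_cartan[OF g xx x1]
  have Lpm: "Legendre (mat2_det g) p = 1 \<or> Legendre (mat2_det g) p = -1"
    using leg_pm GL2_det[OF g] by blast
  show "Legendre (mat2_det g) p = 1 \<Longrightarrow>
           ([p = 1] (mod 4) \<longrightarrow> in_split_cartan p {\<one>\<^bsub>PGL2 p\<^esub>, proj2 p g})
         \<and> ([p = 3] (mod 4) \<longrightarrow> in_nonsplit_cartan p {\<one>\<^bsub>PGL2 p\<^esub>, proj2 p g})"
    using ic mod4 Lm1 unfolding in_split_cartan_def in_nonsplit_cartan_def by auto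
  show "Legendre (mat2_det g) p \<noteq> 1 \<Longrightarrow>
           ([p = 1] (mod 4) \<longrightarrow> in_nonsplit_cartan p {\<one>\<^bsub>PGL2 p\<^esub>, proj2 p g})
         \<and> ([p = 3] (mod 4) \<longrightarrow> in_split_cartan p {\<one>\<^bsub>PGL2 p\<^esub>, proj2 p g})"
    using ic mod4 Lm1 Lpm unfolding in_split_cartan_def in_nonsplit_cartan_def by auto
qed


lemma lift_elem:
  assumes "x \<in> carrier (PGL2 p)"
  obtains g where "g \<in> carrier (GL2 p)" "x = proj2 p g"
  using assms P_carrier by blast

lemma part1:
  assumes sub: "subgroup N (PGL2 p)"
    and iso: "(PGL2 p)\<lparr>carrier := N\<rparr> \<cong> integer_mod_group 2 \<times>\<times> integer_mod_group 2"
    and NP: "N \<subseteq> PSL2 p"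
  shows "\<forall>C \<in> index2_subgroups p N.
               \<exists>T. cartan p T \<and> C \<subseteq> proj2 p ` T
                   \<and> N \<subseteq> normalizer (PGL2 p) (proj2 p ` T)
                   \<and> ([p = 1] (mod 4) \<longrightarrow> split_cartan p T)
                   \<and> ([p = 3] (mod 4) \<longrightarrow> nonsplit_cartan p T)"
proof
  note NS = N_struct[OF sub iso]
  fix C assume "C \<in> index2_subgroups p N"
  then have "C \<in> (\<lambda>x. {\<one>\<^bsub>PGL2 p\<^esub>, x}) ` (N - {\<one>\<^bsub>PGL2 p\<^esub>})"
    using idx2[OF sub NS(1)] NS(2) by blast
  then obtain x where x: "x \<in> N" "x \<noteq> \<one>\<^bsub>PGL2 p\<^esub>" and C: "C = {\<one>\<^bsub>PGL2 p\<^esub>, x}" by blast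
  have xc: "x \<in> carrier (PGL2 p)" using x subgroup.subset[OF sub] by blast
  obtain g where g: "g \<in> carrier (GL2 p)" and xg: "x = proj2 p g" using lift_elem[OF xc] by blast
  have L1: "Legendre (mat2_det g) p = 1" using PSL_iff[OF g] NP x xg by blast
  have xx: "proj2 p g \<otimes>\<^bsub>PGL2 p\<^esub> proj2 p g = \<one>\<^bsub>PGL2 p\<^esub>" using NS(2)[OF x(1)] xg by simp
  have x1: "proj2 p g \<noteq> \<one>\<^bsub>PGL2 p\<^esub>" using x xg by simp
  note ic = invol_cartan[OF g xx x1]
  have sp: "[p = 1] (mod 4) \<longrightarrow> split_cartan p (cent g)" using ic(2) L1 Lm1 by simp
  have nsp: "[p = 3] (mod 4) \<longrightarrow> nonsplit_cartan p (cent g)" using ic(3) L1 Lm1 mod4 by simp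
  have ct: "cartan p (cent g)"
    unfolding cartan_def using ic(2,3) by blast
  have nm: "N \<subseteq> normalizer (PGL2 p) (proj2 p ` cent g)"
  proof
    fix y assume y: "y \<in> N"
    have yc: "y \<in> carrier (PGL2 p)" using y subgroup.subset[OF sub] by blast
    obtain k where k: "k \<in> carrier (GL2 p)" and yk: "y = proj2 p k" using lift_elem[OF yc] by blast
    have "proj2 p k \<otimes>\<^bsub>PGL2 p\<^esub> proj2 p g = proj2 p g \<otimes>\<^bsub>PGL2 p\<^esub> proj2 p k"
      using NS(3)[OF y x(1)] xg yk by simp
    then have "conjugate_set p k (cent g) = cent g" using cent_normal[OF g k] by blast
    then have "proj2 p k \<in> normalizer (PGL2 p) (proj2 p ` cent g)" using norm_of_conj[OF cent_sub k] by blast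
    then show "y \<in> normalizer (PGL2 p) (proj2 p ` cent g)" using yk by simp
  qed
  have "C \<subseteq> proj2 p ` cent g" using ic(1) C xg by simp
  then show "\<exists>T. cartan p T \<and> C \<subseteq> proj2 p ` T
                   \<and> N \<subseteq> normalizer (PGL2 p) (proj2 p ` T)
                   \<and> ([p = 1] (mod 4) \<longrightarrow> split_cartan p T)
                   \<and> ([p = 3] (mod 4) \<longrightarrow> nonsplit_cartan p T)"
    using ct nm sp nsp by blast
qed


lemma pair_inj: "a \<noteq> u \<Longrightarrow> b \<noteq> u \<Longrightarrow> {u, a} = {u, b} \<Longrightarrow> a = b"
  by (metis doubleton_eq_iff)

lemma card3: "a \<noteq> b \<Longrightarrow> a \<noteq> c \<Longrightarrow> b \<noteq> c \<Longrightarrow> card {a, b, c} = 3"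
  by simp

lemma one_PSL: "\<one>\<^bsub>PGL2 p\<^esub> \<in> PSL2 p"
proof -
  have oc: "(1, 0, 0, 1) \<in> carrier (GL2 p)" using monoid.one_closed[OF group.is_monoid[OF grp]] by (simp add: GL2_one)
  have "QuadRes p (mat2_det (1, 0, 0, 1))" unfolding QuadRes_def mat2_det_def
    by (intro exI[of _ 1]) simp
  then have "proj2 p (1, 0, 0, 1) \<in> PSL2 p" using oc unfolding PSL2_def by blast
  then show ?thesis using proj_one by (simp add: GL2_one)
qed

lemma part2:
  assumes sub: "subgroup N (PGL2 p)"
    and iso: "(PGL2 p)\<lparr>carrier := N\<rparr> \<cong> integer_mod_group 2 \<times>\<times> integer_mod_group 2"
    and NP: "\<not> N \<subseteq> PSL2 p"
  shows "\<exists>C1 C2 C3. index2_subgroups p N = {C1, C2, C3} \<and> card {C1, C2, C3} = 3 \<and>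
               ([p = 1] (mod 4) \<longrightarrow>
                  in_split_cartan p C1 \<and> in_nonsplit_cartan p C2 \<and> in_nonsplit_cartan p C3) \<and>
               ([p = 3] (mod 4) \<longrightarrow>
                  in_nonsplit_cartan p C1 \<and> in_split_cartan p C2 \<and> in_split_cartan p C3)"
proof -
  note NS = N_struct[OF sub iso]
  let ?o = "\<one>\<^bsub>PGL2 p\<^esub>"
  have Nc: "N \<subseteq> carrier (PGL2 p)" using subgroup.subset[OF sub] .
  have oN: "?o \<in> N" using subgroup.one_closed[OF sub] .
  obtain y where y: "y \<in> N" "y \<notin> PSL2 p" using NP by blast
  have y1: "y \<noteq> ?o" using y one_PSL by blast
  have fN: "finite N" using NS(1) card.infinite by fastforce
  have "card (N - {?o, y}) = 2" using NS(1) fN oN y(1) y1 by (simp add: card_Diff_subset)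
  then have "N - {?o, y} \<noteq> {}" by (metis card.empty zero_neq_numeral)
  then obtain z where z: "z \<in> N" "z \<noteq> ?o" "z \<noteq> y" by blast
  have yc: "y \<in> carrier (PGL2 p)" and zc: "z \<in> carrier (PGL2 p)" using y z Nc by blast+
  define w where "w = y \<otimes>\<^bsub>PGL2 p\<^esub> z"
  have wN: "w \<in> N" unfolding w_def using subgroup.m_closed[OF sub y(1) z(1)] .
  interpret P: group "PGL2 p" by (rule pgrp)
  have w1: "w \<noteq> ?o"
  proof
    assume "w = ?o"
    then have "y \<otimes>\<^bsub>PGL2 p\<^esub> z = y \<otimes>\<^bsub>PGL2 p\<^esub> y" using NS(2)[OF y(1)] unfolding w_def by simp
    then have "z = y" using yc zc by simp
    then show False using z by simp
  qed
  have wy: "w \<noteq> y"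
  proof
    assume "w = y"
    then have "y \<otimes>\<^bsub>PGL2 p\<^esub> z = y \<otimes>\<^bsub>PGL2 p\<^esub> ?o" using yc unfolding w_def by simp
    then have "z = ?o" using yc zc by simp
    then show False using z by simp
  qed
  have wz: "w \<noteq> z"
  proof
    assume "w = z"
    then have "y \<otimes>\<^bsub>PGL2 p\<^esub> z = ?o \<otimes>\<^bsub>PGL2 p\<^esub> z" using zc unfolding w_def by simp
    then have "y = ?o" using yc zc by simp
    then show False using y1 by simp
  qed
  have "card (N - {?o}) = 3" using NS(1) fN oN by (simp add: card_Diff_singleton)
  moreover have "{y, z, w} \<subseteq> N - {?o}" using y z wN w1 y1 by blast
  moreover have "card {y, z, w} = 3" using z(3) wy wz by simp
  ultimately have Ne: "N - {?o} = {y, z, w}" using fN by (metis card_subset_eq finite_Diff)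
  have I2: "index2_subgroups p N = {{?o, y}, {?o, z}, {?o, w}}"
    using idx2[OF sub NS(1) NS(2)] Ne by simp
  have d1: "{?o, y} \<noteq> {?o, z}"
  proof
    assume "{?o, y} = {?o, z}" then have "y = z" by (rule pair_inj[OF y1 z(2)])
    then show False using z(3) by simp
  qed
  have d2: "{?o, y} \<noteq> {?o, w}"
  proof
    assume "{?o, y} = {?o, w}" then have "y = w" by (rule pair_inj[OF y1 w1])
    then show False using wy by simp
  qed
  have d3: "{?o, z} \<noteq> {?o, w}"
  proof
    assume "{?o, z} = {?o, w}" then have "z = w" by (rule pair_inj[OF z(2) w1])
    then show False using wz by simp
  qed
  obtain gy where gy: "gy \<in> carrier (GL2 p)" "y = proj2 p gy" using lift_elem[OF yc] by blast
  obtain gz where gz: "gz \<in> carrier (GL2 p)" "z = proj2 p gz" using lift_elem[OF zc] by blast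
  define gw where "gw = gy \<otimes>\<^bsub>GL2 p\<^esub> gz"
  have gwc: "gw \<in> carrier (GL2 p)" unfolding gw_def using monoid.m_closed[OF group.is_monoid[OF grp] gy(1) gz(1)] .
  have gww: "w = proj2 p gw" unfolding w_def gw_def using proj_mult[OF gy(1) gz(1)] gy gz by simp
  have Ly: "Legendre (mat2_det gy) p \<noteq> 1" using PSL_iff[OF gy(1)] y gy by simp
  then have Ly': "Legendre (mat2_det gy) p = -1" using leg_pm GL2_det[OF gy(1)] by blast
  have Lw: "Legendre (mat2_det gw) p = - Legendre (mat2_det gz) p"
    unfolding gw_def leg_det_mult Ly' by simp
  have Lz: "Legendre (mat2_det gz) p = 1 \<or> Legendre (mat2_det gz) p = -1"
    using leg_pm GL2_det[OF gz(1)] by blast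
  note cy = elem_class[OF gy(1) NS(2)[OF y(1), unfolded gy(2)] y1[unfolded gy(2)], folded gy(2)]
  note cz = elem_class[OF gz(1) NS(2)[OF z(1), unfolded gz(2)] z(2)[unfolded gz(2)], folded gz(2)]
  note cw = elem_class[OF gwc NS(2)[OF wN, unfolded gww] w1[unfolded gww], folded gww]
  show ?thesis
  proof (cases "Legendre (mat2_det gz) p = 1")
    case True
    then have "Legendre (mat2_det gw) p \<noteq> 1" using Lw by simp
    then have cw': "([p = 1] (mod 4) \<longrightarrow> in_nonsplit_cartan p {?o, w}) \<and> ([p = 3] (mod 4) \<longrightarrow> in_split_cartan p {?o, w})"
      by (rule cw(2))
    have e1: "index2_subgroups p N = {{?o, z}, {?o, y}, {?o, w}}" unfolding I2 by (rule insert_commute)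
    have c3: "card {{?o, z}, {?o, y}, {?o, w}} = 3" by (rule card3) (use d1 d2 d3 in auto)
    note a1 = cy(2)[OF Ly] and a2 = cz(1)[OF True]
    show ?thesis
    proof (rule exI[of _ "{?o, z}"], rule exI[of _ "{?o, y}"], rule exI[of _ "{?o, w}"], intro conjI impI)
      show "index2_subgroups p N = {{?o, z}, {?o, y}, {?o, w}}" by (rule e1)
      show "card {{?o, z}, {?o, y}, {?o, w}} = 3" by (rule c3)
      assume h: "[p = 1] (mod 4)"
      show "in_split_cartan p {?o, z}" using a2 h by (rule conjunct1[THEN mp])
      show "in_nonsplit_cartan p {?o, y}" using a1 h by (rule conjunct1[THEN mp])
      show "in_nonsplit_cartan p {?o, w}" using cw' h by (rule conjunct1[THEN mp])
    next
      assume h: "[p = 3] (mod 4)"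
      show "in_nonsplit_cartan p {?o, z}" using a2 h by (rule conjunct2[THEN mp])
      show "in_split_cartan p {?o, y}" using a1 h by (rule conjunct2[THEN mp])
      show "in_split_cartan p {?o, w}" using cw' h by (rule conjunct2[THEN mp])
    qed
  next
    case False
    then have Lz': "Legendre (mat2_det gz) p = -1" using Lz by simp
    then have Lw1: "Legendre (mat2_det gw) p = 1" using Lw by simp
    have "{{?o, y}, {?o, z}, {?o, w}} = {{?o, y}, {?o, w}, {?o, z}}" by (simp only: insert_commute)
    then have e1: "index2_subgroups p N = {{?o, w}, {?o, y}, {?o, z}}" unfolding I2 by (simp only: insert_commute)
    have c3: "card {{?o, w}, {?o, y}, {?o, z}} = 3" by (rule card3) (use d1 d2 d3 in auto)
    note a1 = cy(2)[OF Ly] and a2 = cz(2)[OF False] and a3 = cw(1)[OF Lw1]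
    show ?thesis
    proof (rule exI[of _ "{?o, w}"], rule exI[of _ "{?o, y}"], rule exI[of _ "{?o, z}"], intro conjI impI)
      show "index2_subgroups p N = {{?o, w}, {?o, y}, {?o, z}}" by (rule e1)
      show "card {{?o, w}, {?o, y}, {?o, z}} = 3" by (rule c3)
      assume h: "[p = 1] (mod 4)"
      show "in_split_cartan p {?o, w}" using a3 h by (rule conjunct1[THEN mp])
      show "in_nonsplit_cartan p {?o, y}" using a1 h by (rule conjunct1[THEN mp])
      show "in_nonsplit_cartan p {?o, z}" using a2 h by (rule conjunct1[THEN mp])
    next
      assume h: "[p = 3] (mod 4)"
      show "in_nonsplit_cartan p {?o, w}" using a3 h by (rule conjunct2[THEN mp])
      show "in_split_cartan p {?o, y}" using a1 h by (rule conjunct2[THEN mp])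
      show "in_split_cartan p {?o, z}" using a2 h by (rule conjunct2[THEN mp])
    qed
  qed
qed

end

theorem lemma2p7:
  fixes p :: int and N :: "mat2 set set"
  assumes "Factorial_Ring.prime p" and "odd p"
    and "subgroup N (PGL2 p)"
    and "(PGL2 p)\<lparr>carrier := N\<rparr> \<cong> integer_mod_group 2 \<times>\<times> integer_mod_group 2"
  shows "(N \<subseteq> PSL2 p \<longrightarrow>
            (\<forall>C \<in> index2_subgroups p N.
               \<exists>T. cartan p T \<and> C \<subseteq> proj2 p ` T
                   \<and> N \<subseteq> normalizer (PGL2 p) (proj2 p ` T)
                   \<and> ([p = 1] (mod 4) \<longrightarrow> split_cartan p T)
                   \<and> ([p = 3] (mod 4) \<longrightarrow> nonsplit_cartan p T)))
       \<and> (\<not> N \<subseteq> PSL2 p \<longrightarrow>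
            (\<exists>C1 C2 C3. index2_subgroups p N = {C1, C2, C3} \<and> card {C1, C2, C3} = 3 \<and>
               ([p = 1] (mod 4) \<longrightarrow>
                  in_split_cartan p C1 \<and> in_nonsplit_cartan p C2 \<and> in_nonsplit_cartan p C3) \<and>
               ([p = 3] (mod 4) \<longrightarrow>
                  in_nonsplit_cartan p C1 \<and> in_split_cartan p C2 \<and> in_split_cartan p C3)))"
proof -
  interpret pp p using assms(1,2) by (rule pp.intro)
  show ?thesis
    apply (intro conjI impI)
     apply (erule part1[OF assms(3,4)])
    apply (erule part2[OF assms(3,4)])
    done
qed

end
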